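(* Let $p\in[1,\infty)$, $w$ a weight sequence, and let $A\subset L_{p,w}$ be bounded in $\|\cdot\|_{p,w}$ and equinormed with respect to $\{\|\cdot\|_{p,w,i}\}_{i\in\mathbb{N}}$. Then $$\forall d>0\ \exists N\in\mathbb{N}\ \forall a\in A\ \forall n\ge N:\ |a_n|<d.$$
   Context: A weight sequence is a sequence $w=(w_i)$ of positive reals with $w_1=1\ge w_2\ge\dots$, $w_i\to0$, and $\sum_i w_i=+\infty$. For a real sequence $a$, $\|a\|_{p,w}=\sup_{\sigma}\big(\sum_{i=1}^\infty |a_{\sigma_i}|^p w_i\big)^{1/p}$ over all permutations $\sigma$ of $\mathbb{N}$, and $L_{p,w}$ is the set of real sequences with finite $\|\cdot\|_{p,w}$. For $i\in\mathbb{N}$, $\|a\|_{p,w,i}=\|(a_1,\dots,a_i,0,0,\dots)\|_{p,w}$. $A$ is equinormed if $\forall\varepsilon>0\ \exists i\ \forall a\in A:\ \|a\|_{p,w}\le\|a\|_{p,w,i}+\varepsilon$. *)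

theory Defs
  imports "HOL-Analysis.Analysis"
begin

text \<open>Sequences are functions nat => real, indexed from 0 (index 0 corresponds to
the paper's index 1).\<close>

definition weight_seq :: "(nat \<Rightarrow> real) \<Rightarrow> bool" where
  "weight_seq w \<longleftrightarrow> (\<forall>i. w i > 0) \<and> w 0 = 1 \<and> decseq w \<and> w \<longlonglongrightarrow> 0 \<and> \<not> summable w"

definition lorentz_psum :: "real \<Rightarrow> (nat \<Rightarrow> real) \<Rightarrow> (nat \<Rightarrow> real) \<Rightarrow> ennreal" where
  "lorentz_psum p w a = (SUP \<sigma>\<in>{\<sigma>. bij \<sigma>}. (\<Sum>i. ennreal (\<bar>a (\<sigma> i)\<bar> powr p * w i)))"

definition in_Lpw :: "real \<Rightarrow> (nat \<Rightarrow> real) \<Rightarrow> (nat \<Rightarrow> real) \<Rightarrow> bool" where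
  "in_Lpw p w a \<longleftrightarrow> lorentz_psum p w a < \<infinity>"

text \<open>The norm ||a||_{p,w} (meaningful for a in L_{p,w}, where the supremum is finite).\<close>
definition lorentz_norm :: "real \<Rightarrow> (nat \<Rightarrow> real) \<Rightarrow> (nat \<Rightarrow> real) \<Rightarrow> real" where
  "lorentz_norm p w a = (enn2real (lorentz_psum p w a)) powr (1 / p)"

definition trunc_seq :: "(nat \<Rightarrow> real) \<Rightarrow> nat \<Rightarrow> (nat \<Rightarrow> real)" where
  "trunc_seq a i = (\<lambda>n. if n < i then a n else 0)"

definition lorentz_norm_i :: "real \<Rightarrow> (nat \<Rightarrow> real) \<Rightarrow> nat \<Rightarrow> (nat \<Rightarrow> real) \<Rightarrow> real" where
  "lorentz_norm_i p w i a = lorentz_norm p w (trunc_seq a i)"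

definition equinormed :: "real \<Rightarrow> (nat \<Rightarrow> real) \<Rightarrow> (nat \<Rightarrow> real) set \<Rightarrow> bool" where
  "equinormed p w A \<longleftrightarrow>
     (\<forall>\<epsilon>>0. \<exists>i. \<forall>a\<in>A. lorentz_norm p w a \<le> lorentz_norm_i p w i a + \<epsilon>)"

end

theory Submission
  imports Defs
begin

lemma key:
  fixes a w :: "nat \<Rightarrow> real" and p d Q c :: real and i n K :: nat
  assumes p: "0 < p" and wpos: "\<And>k. w k > 0" and dec: "decseq w"
    and ni: "i \<le> n" and an: "d \<le> \<bar>a n\<bar>" and d: "0 < d"
    and bnd: "\<And>\<sigma>. bij \<sigma> \<Longrightarrow> (\<Sum>k. ennreal (\<bar>a (\<sigma> k)\<bar> powr p * w k)) \<le> ennreal Q"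
    and Q0: "0 \<le> Q" and big: "Q < (d/2) powr p * (\<Sum>k<K. w k)"
    and cdef: "c = (d powr p - (d/2) powr p) * w K"
  shows "lorentz_psum p w (trunc_seq a i) + ennreal c \<le> lorentz_psum p w a"
proof -
  let ?b = "trunc_seq a i"
  have babs: "\<bar>?b k\<bar> \<le> \<bar>a k\<bar>" for k by (simp add: trunc_seq_def)
  have bn: "?b n = 0" using ni by (simp add: trunc_seq_def)
  have hd: "(d/2) powr p \<le> d powr p" using d p by (intro powr_mono2) auto
  have c0: "0 \<le> c" using cdef hd wpos[of K] by simp
  have main: "(\<Sum>k. ennreal (\<bar>?b (\<sigma> k)\<bar> powr p * w k)) + ennreal c \<le> lorentz_psum p w a"
    if bs: "bij \<sigma>" for \<sigma>
  proof -
    have "\<exists>j<K. \<bar>?b (\<sigma> j)\<bar> < d/2"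
    proof (rule ccontr)
      assume "\<not> ?thesis"
      hence ge: "\<And>j. j < K \<Longrightarrow> d/2 \<le> \<bar>a (\<sigma> j)\<bar>" using babs by (meson not_less order_trans)
      have "ennreal ((d/2) powr p * (\<Sum>k<K. w k)) = (\<Sum>k<K. ennreal ((d/2) powr p * w k))"
        using wpos by (simp add: sum_distrib_left less_imp_le)
      also have "\<dots> \<le> (\<Sum>k<K. ennreal (\<bar>a (\<sigma> k)\<bar> powr p * w k))"
        using ge wpos d p by (intro sum_mono ennreal_leI mult_right_mono powr_mono2) (auto intro: less_imp_le)
      also have "\<dots> \<le> (\<Sum>k. ennreal (\<bar>a (\<sigma> k)\<bar> powr p * w k))"
        by (rule sum_le_suminf) (auto intro: summableI)
      also have "\<dots> \<le> ennreal Q" using bnd bs .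
      finally have "ennreal ((d/2) powr p * (\<Sum>k<K. w k)) \<le> ennreal Q" .
      moreover have "ennreal Q < ennreal ((d/2) powr p * (\<Sum>k<K. w k))"
        using big Q0 by (intro ennreal_lessI) auto
      ultimately show False by simp
    qed
    then obtain j where jK: "j < K" and bj: "\<bar>?b (\<sigma> j)\<bar> < d/2" by blast
    define m where "m = inv \<sigma> n"
    have sm: "\<sigma> m = n" unfolding m_def using bs by (simp add: bij_is_surj surj_f_inv_f)
    define sw where "sw = (\<lambda>k::nat. if k = j then m else if k = m then j else k)"
    have swsw: "sw (sw k) = k" for k unfolding sw_def by auto
    have "bij sw" by (metis bijI' swsw)
    define \<tau> where "\<tau> = \<sigma> \<circ> sw"
    have bt: "bij \<tau>" unfolding \<tau>_def using bs \<open>bij sw\<close> by (rule bij_comp[rotated])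
    have wj: "w K \<le> w j" using dec jK by (simp add: decseq_def)
    have pt: "ennreal (\<bar>?b (\<sigma> k)\<bar> powr p * w k) + ennreal (if k = j then c else 0)
            \<le> ennreal (\<bar>a (\<tau> k)\<bar> powr p * w k)" for k
    proof (cases "k = j")
      case True
      have t: "\<tau> k = n" using True sm by (simp add: \<tau>_def sw_def)
      have "\<bar>?b (\<sigma> j)\<bar> powr p \<le> (d/2) powr p" using bj p by (intro powr_mono2) auto
      hence 1: "\<bar>?b (\<sigma> j)\<bar> powr p * w j \<le> (d/2) powr p * w j" using wpos[of j] by (simp add: mult_right_mono)
      have "d powr p \<le> \<bar>a n\<bar> powr p" using an d p by (intro powr_mono2) auto
      hence 2: "d powr p * w j \<le> \<bar>a n\<bar> powr p * w j" using wpos[of j] by (simp add: mult_right_mono)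
      have 3: "c \<le> d powr p * w j - (d/2) powr p * w j"
        using cdef hd wj by (simp add: mult_left_mono left_diff_distrib[symmetric])
      have "\<bar>?b (\<sigma> j)\<bar> powr p * w j + c \<le> \<bar>a n\<bar> powr p * w j"
        using 1 2 3 by linarith
      thus ?thesis using True t c0 wpos[of j] by (simp add: ennreal_plus[symmetric] less_imp_le del: ennreal_plus)
    next
      case False
      show ?thesis
      proof (cases "k = m")
        case True
        thus ?thesis using False sm bn p wpos[of k] by simp
      next
        case F2: False
        have t: "\<tau> k = \<sigma> k" using False F2 by (simp add: \<tau>_def sw_def)
        have "\<bar>?b (\<sigma> k)\<bar> powr p \<le> \<bar>a (\<sigma> k)\<bar> powr p" using babs p by (intro powr_mono2) auto
        thus ?thesis using False t wpos[of k] by (simp add: ennreal_leI mult_right_mono less_imp_le)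
      qed
    qed
    have "(\<Sum>k. ennreal (\<bar>?b (\<sigma> k)\<bar> powr p * w k)) + ennreal c
        = (\<Sum>k. ennreal (\<bar>?b (\<sigma> k)\<bar> powr p * w k)) + (\<Sum>k. ennreal (if k = j then c else 0))"
    proof -
      have "(\<lambda>k. ennreal (if k = j then c else 0)) = (\<lambda>k. if k = j then ennreal c else 0)" by auto
      moreover have "(\<Sum>k. (if k = j then ennreal c else 0)) = ennreal c"
        using sums_single[of j "\<lambda>_. ennreal c"] by (simp add: sums_iff)
      ultimately show ?thesis by simp
    qed
    also have "\<dots> = (\<Sum>k. ennreal (\<bar>?b (\<sigma> k)\<bar> powr p * w k) + ennreal (if k = j then c else 0))"
      by (rule suminf_add) (auto intro: summableI)
    also have "\<dots> \<le> (\<Sum>k. ennreal (\<bar>a (\<tau> k)\<bar> powr p * w k))"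
      by (rule suminf_le, rule pt) (auto intro: summableI)
    also have "\<dots> \<le> lorentz_psum p w a" unfolding lorentz_psum_def
      by (rule SUP_upper) (use bt in simp)
    finally show ?thesis .
  qed
  have ne: "{\<sigma>::nat\<Rightarrow>nat. bij \<sigma>} \<noteq> {}" using bij_id by blast
  have "(SUP \<sigma>\<in>{\<sigma>. bij \<sigma>}. (\<Sum>k. ennreal (\<bar>?b (\<sigma> k)\<bar> powr p * w k)) + ennreal c) \<le> lorentz_psum p w a"
    using main by (intro SUP_least) auto
  thus ?thesis unfolding lorentz_psum_def[of p w ?b]
    by (simp add: ennreal_SUP_add_left[OF ne, symmetric])
qed

lemma psum_eq:
  assumes "lorentz_psum p w a \<noteq> \<infinity>" and "0 < p"
  shows "lorentz_psum p w a = ennreal (lorentz_norm p w a powr p)"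
proof -
  have "lorentz_norm p w a powr p = enn2real (lorentz_psum p w a)"
    unfolding lorentz_norm_def using assms(2) by (simp add: powr_powr)
  thus ?thesis using assms(1) by (simp add: ennreal_enn2real_if)
qed

theorem mainTheorem9:
  fixes p :: real and w :: "nat \<Rightarrow> real" and A :: "(nat \<Rightarrow> real) set"
  assumes "1 \<le> p"
    and "weight_seq w"
    and "\<forall>a\<in>A. in_Lpw p w a"
    and "\<exists>M. \<forall>a\<in>A. lorentz_norm p w a \<le> M"
    and "equinormed p w A"
  shows "\<forall>d>0. \<exists>N. \<forall>a\<in>A. \<forall>n\<ge>N. \<bar>a n\<bar> < d"
proof (intro allI impI)
  fix d :: real assume d: "0 < d"
  have p: "0 < p" using assms(1) by simp
  have wpos: "\<And>k. w k > 0" and dec: "decseq w" and ns: "\<not> summable w"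
    using assms(2) unfolding weight_seq_def by auto
  obtain M0 where M0: "\<forall>a\<in>A. lorentz_norm p w a \<le> M0" using assms(4) by blast
  define M where "M = max M0 0"
  have M: "\<And>a. a \<in> A \<Longrightarrow> lorentz_norm p w a \<le> M" and M0': "0 \<le> M"
    using M0 unfolding M_def by force+
  define Q where "Q = M powr p"
  have Q0: "0 \<le> Q" unfolding Q_def by simp
  have hp: "0 < (d/2) powr p" using d by simp
  obtain K where big: "Q < (d/2) powr p * (\<Sum>k<K. w k)"
  proof (rule ccontr)
    assume "\<not> thesis"
    hence "\<forall>K. (\<Sum>k<K. w k) \<le> Q / (d/2) powr p"
      using that hp by (metis not_less pos_le_divide_eq mult.commute)
    hence "summable w" using wpos by (intro summableI_nonneg_bounded[of w "Q / (d/2) powr p"]) (auto intro: less_imp_le)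
    thus False using ns by simp
  qed
  define c where "c = (d powr p - (d/2) powr p) * w K"
  have "(d/2) powr p < d powr p" using d p by (intro powr_less_mono2) auto
  hence c0: "0 < c" unfolding c_def using wpos[of K] by simp
  have "continuous_on {0..M} (\<lambda>t::real. t powr p)"
    using p by (intro continuous_on_powr' continuous_intros) auto
  hence "uniformly_continuous_on {0..M} (\<lambda>t::real. t powr p)"
    by (intro compact_uniformly_continuous) auto
  then obtain \<delta> where \<delta>: "\<delta> > 0" and uc: "\<And>x x'. x \<in> {0..M} \<Longrightarrow> x' \<in> {0..M} \<Longrightarrow> dist x' x < \<delta>
      \<Longrightarrow> dist (x' powr p) (x powr p) < c"
    unfolding uniformly_continuous_on_def using c0 by metis
  obtain i where eq: "\<forall>a\<in>A. lorentz_norm p w a \<le> lorentz_norm_i p w i a + \<delta>/2"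
    using assms(5) \<delta> unfolding equinormed_def by (meson half_gt_zero)
  show "\<exists>N. \<forall>a\<in>A. \<forall>n\<ge>N. \<bar>a n\<bar> < d"
  proof (intro exI ballI allI impI)
    fix a n assume aA: "a \<in> A" and ni: "i \<le> n"
    show "\<bar>a n\<bar> < d"
    proof (rule ccontr)
      assume "\<not> \<bar>a n\<bar> < d"
      hence an: "d \<le> \<bar>a n\<bar>" by simp
      define x where "x = lorentz_norm p w a"
      define y where "y = lorentz_norm_i p w i a"
      have fin: "lorentz_psum p w a \<noteq> \<infinity>" using assms(3) aA unfolding in_Lpw_def by auto
      have Pa: "lorentz_psum p w a = ennreal (x powr p)" unfolding x_def using psum_eq[OF fin p] .
      have xM: "x \<le> M" unfolding x_def using M aA by simp
      have x0: "0 \<le> x" unfolding x_def lorentz_norm_def by simp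
      have y0: "0 \<le> y" unfolding y_def lorentz_norm_i_def lorentz_norm_def by simp
      have xQ: "x powr p \<le> Q" unfolding Q_def using xM x0 p by (intro powr_mono2) auto
      have bnd: "(\<Sum>k. ennreal (\<bar>a (\<sigma> k)\<bar> powr p * w k)) \<le> ennreal Q" if "bij \<sigma>" for \<sigma>
      proof -
        have "(\<Sum>k. ennreal (\<bar>a (\<sigma> k)\<bar> powr p * w k)) \<le> lorentz_psum p w a"
          unfolding lorentz_psum_def by (rule SUP_upper) (use that in simp)
        also have "\<dots> \<le> ennreal Q" using Pa xQ by (simp add: ennreal_leI)
        finally show ?thesis .
      qed
      have kk: "lorentz_psum p w (trunc_seq a i) + ennreal c \<le> lorentz_psum p w a"
        by (rule key[of p w i n d a Q K c, OF p wpos dec ni an d bnd Q0 big c_def])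
      have finb: "lorentz_psum p w (trunc_seq a i) \<noteq> \<infinity>"
        using kk fin by (metis ennreal_add_eq_top infinity_ennreal_def top.extremum_uniqueI)
      have Pb: "lorentz_psum p w (trunc_seq a i) = ennreal (y powr p)"
        unfolding y_def lorentz_norm_i_def using psum_eq[OF finb p] .
      have "ennreal (y powr p + c) \<le> ennreal (x powr p)"
        using kk Pa Pb c0 by (simp add: ennreal_plus[symmetric] less_imp_le del: ennreal_plus)
      hence ineq: "y powr p + c \<le> x powr p" using x0 by (simp add: ennreal_le_iff)
      have xy: "x \<le> y + \<delta>/2" using eq aA unfolding x_def y_def by simp
      show False
      proof (cases "x \<le> y")
        case True
        hence "x powr p \<le> y powr p" using x0 p by (intro powr_mono2) auto
        thus False using ineq c0 by simp
      next
        case False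
        have "dist y x < \<delta>" using False xy \<delta> by (simp add: dist_real_def)
        hence "dist (y powr p) (x powr p) < c" using uc[of x y] x0 y0 xM False by simp
        thus False using ineq by (simp add: dist_real_def)
      qed
    qed
  qed
qed

end
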